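(* Let $S(\mathbf{G},\mathbf{\Sigma})$ be a constrained switching system with automaton $\mathbf{G}(V,E)$ and $\mathbf{\Sigma}=\{A_1,\dots,A_N\}\subset\mathbb{R}^{n\times n}$, and let $|\cdot|$ be a fixed vector norm on $\mathbb{R}^n$. Then $S$ admits an extremal multinorm, i.e. a multinorm $\mathcal{M}^*=\{|\cdot|_v : v\in V\}$ with $\gamma^*(\mathcal{M}^* )=\hat\rho(S)$, if and only if there exists a constant $K\ge 1$ such that for every path $p$ in $\mathbf{G}$ and every $x\in\mathbb{R}^n$, $$|A_p x|\le K\,\hat\rho(S)^{T_p}|x|,$$ where $T_p\ge 0$ is the length of $p$.
   Context: An automaton $\mathbf{G}(V,E)$ is a strongly connected directed graph with finite node set $V$ and finite edge set $E$ of labelled edges $(v,w,\sigma)$, $v,w\in V$, $\sigma\in\{1,\dots,N\}$. A path of length $T$ is a sequence of $T$ consecutive edges; if its labels are $\sigma(1),\dots,\sigma(T)$ then $A_p=A_{\sigma(T)}\cdots A_{\sigma(1)}$, and $A_p=I$ for $T=0$. A sequence of modes is accepted by $\mathbf{G}$ if it is the succession of labels along some path (no prescribed initial or final node). The CJSR of $S(\mathbf{G},\mathbf{\Sigma})$ is $$\hat\rho(S)=\lim_{t\to\infty}\max\{\|A_{\sigma(t-1)}\cdots A_{\sigma(0)}\|^{1/t} : \sigma(0),\dots,\sigma(t-1)\text{ accepted by }\mathbf{G}\}.$$ A multinorm for $S$ is a family $\{|\cdot|_v : v\in V\}$ of vector norms on $\mathbb{R}^n$, one per node, with value $\gamma^*(\mathcal{M})=\min\{\gamma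 : |A_\sigma x|_w\le\gamma|x|_v\ \forall x\in\mathbb{R}^n,\ \forall (v,w,\sigma)\in E\}$. *)

theory Defs
  imports "HOL-Analysis.Analysis"
begin

text \<open>Edges are triples (v, w, sigma): from node v to node w with label sigma.\<close>

definition edge_rel :: "('v \<times> 'v \<times> nat) set \<Rightarrow> ('v \<times> 'v) set" where
  "edge_rel E = {(v, w). \<exists>s. (v, w, s) \<in> E}"

definition automaton :: "'v set \<Rightarrow> ('v \<times> 'v \<times> nat) set \<Rightarrow> nat \<Rightarrow> bool" where
  "automaton V E N \<longleftrightarrow> finite V \<and> V \<noteq> {} \<and> finite E \<and> E \<noteq> {} \<and>
     E \<subseteq> V \<times> V \<times> {1..N} \<and>
     (\<forall>v\<in>V. \<forall>w\<in>V. (v, w) \<in> (edge_rel E)\<^sup>*)"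

fun is_path :: "('v \<times> 'v \<times> nat) set \<Rightarrow> ('v \<times> 'v \<times> nat) list \<Rightarrow> bool" where
  "is_path E [] = True"
| "is_path E [e] = (e \<in> E)"
| "is_path E (e1 # e2 # es) =
     (e1 \<in> E \<and> fst (snd e1) = fst e2 \<and> is_path E (e2 # es))"

definition label :: "'v \<times> 'v \<times> nat \<Rightarrow> nat" where
  "label e = snd (snd e)"

definition accepted :: "('v \<times> 'v \<times> nat) set \<Rightarrow> nat list \<Rightarrow> bool" where
  "accepted E \<sigma> \<longleftrightarrow> (\<exists>p. is_path E p \<and> map label p = \<sigma>)"

text \<open>Product A_{sigma(t-1)} ... A_{sigma(0)} of the matrices along a mode sequence.\<close>
definition seq_prod :: "(nat \<Rightarrow> real^'n^'n) \<Rightarrow> nat list \<Rightarrow> real^'n^'n" where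
  "seq_prod A \<sigma> = foldl (\<lambda>M s. A s ** M) (mat 1) \<sigma>"

definition path_prod :: "(nat \<Rightarrow> real^'n^'n) \<Rightarrow> ('v \<times> 'v \<times> nat) list \<Rightarrow> real^'n^'n" where
  "path_prod A p = seq_prod A (map label p)"

text \<open>Constrained joint spectral radius (matrix norm: the library norm on real^'n^'n;
  the limit does not depend on the choice of matrix norm).\<close>
definition cjsr :: "('v \<times> 'v \<times> nat) set \<Rightarrow> (nat \<Rightarrow> real^'n^'n) \<Rightarrow> real" where
  "cjsr E A = lim (\<lambda>t. Max {norm (seq_prod A \<sigma>) powr (1 / real t) | \<sigma>.
                              accepted E \<sigma> \<and> length \<sigma> = t})"

definition is_vnorm :: "(real^'n \<Rightarrow> real) \<Rightarrow> bool" where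
  "is_vnorm f \<longleftrightarrow> (\<forall>x. 0 \<le> f x) \<and> (\<forall>x. f x = 0 \<longleftrightarrow> x = 0) \<and>
     (\<forall>c x. f (c *\<^sub>R x) = \<bar>c\<bar> * f x) \<and> (\<forall>x y. f (x + y) \<le> f x + f y)"

definition multinorm :: "'v set \<Rightarrow> ('v \<Rightarrow> real^'n \<Rightarrow> real) \<Rightarrow> bool" where
  "multinorm V M \<longleftrightarrow> (\<forall>v\<in>V. is_vnorm (M v))"

text \<open>gamma*(M): the least gamma with |A_sigma x|_w <= gamma |x|_v on all edges
  (this set is a closed half-line, so its infimum is its minimum).\<close>
definition gamma_star :: "('v \<times> 'v \<times> nat) set \<Rightarrow> (nat \<Rightarrow> real^'n^'n) \<Rightarrow>
    ('v \<Rightarrow> real^'n \<Rightarrow> real) \<Rightarrow> real" where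
  "gamma_star E A M = Inf {\<gamma>. \<forall>x. \<forall>(v, w, s)\<in>E. M w (A s *v x) \<le> \<gamma> * M v x}"

end

theory Submission
  imports Defs
begin

lemma vn_zero: "is_vnorm f \<Longrightarrow> f 0 = 0"
  unfolding is_vnorm_def by blast

lemma vn_nonneg: "is_vnorm f \<Longrightarrow> 0 \<le> f x"
  unfolding is_vnorm_def by blast

lemma vn_scale: "is_vnorm f \<Longrightarrow> f (c *\<^sub>R x) = \<bar>c\<bar> * f x"
  unfolding is_vnorm_def by blast

lemma vn_tri: "is_vnorm f \<Longrightarrow> f (x + y) \<le> f x + f y"
  unfolding is_vnorm_def by blast

lemma vn_pos: "is_vnorm f \<Longrightarrow> x \<noteq> 0 \<Longrightarrow> 0 < f x"
  unfolding is_vnorm_def by (metis less_eq_real_def)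

lemma vn_sum: assumes "is_vnorm f" "finite S"
  shows "f (sum g S) \<le> (\<Sum>i\<in>S. f (g i))"
  using assms(2)
proof (induction S rule: finite_induct)
  case empty then show ?case using vn_zero[OF assms(1)] by simp
next
  case (insert a S)
  then show ?case using vn_tri[OF assms(1), of "g a" "sum g S"] by simp
qed

lemma vn_upper: fixes f :: "real^'n \<Rightarrow> real"
  assumes "is_vnorm f" shows "\<exists>C. \<forall>x. f x \<le> C * norm x"
proof -
  define C where "C = (\<Sum>i\<in>UNIV. f (axis i 1))"
  have "f x \<le> C * norm x" for x
  proof -
    have "f x = f (\<Sum>i\<in>UNIV. x$i *\<^sub>R axis i 1)"
      using basis_expansion[of x] by (simp add: scalar_mult_eq_scaleR)
    also have "\<dots> \<le> (\<Sum>i\<in>UNIV. f (x$i *\<^sub>R axis i 1))" by (rule vn_sum[OF assms]) simp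
    also have "\<dots> = (\<Sum>i\<in>UNIV. \<bar>x$i\<bar> * f (axis i 1))" using vn_scale[OF assms] by simp
    also have "\<dots> \<le> (\<Sum>i\<in>UNIV. norm x * f (axis i 1))"
      by (rule sum_mono, rule mult_right_mono) (auto simp: component_le_norm_cart vn_nonneg[OF assms])
    also have "\<dots> = C * norm x" by (simp add: C_def sum_distrib_left mult.commute)
    finally show ?thesis .
  qed
  then show ?thesis by blast
qed

lemma vn_lower: fixes f :: "real^'n \<Rightarrow> real"
  assumes "is_vnorm f" shows "\<exists>c>0. \<forall>x. c * norm x \<le> f x"
proof -
  obtain C where C: "\<And>x. f x \<le> C * norm x" using vn_upper[OF assms] by blast
  have lip: "\<bar>f x - f y\<bar> \<le> C * dist x y" for x y
  proof -
    have "f x \<le> f y + f (x - y)" using vn_tri[OF assms, of y "x - y"] by simp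
    moreover have "f y \<le> f x + f (y - x)" using vn_tri[OF assms, of x "y - x"] by simp
    moreover have "f (y - x) = f (x - y)" using vn_scale[OF assms, of "-1" "x - y"] by simp
    moreover have "f (x - y) \<le> C * dist x y" using C[of "x - y"] by (simp add: dist_norm)
    ultimately show ?thesis by linarith
  qed
  have Cnn: "0 \<le> C" using C[of "axis undefined 1"] vn_nonneg[OF assms, of "axis undefined 1"]
    by (simp add: zero_le_mult_iff)
  have cont: "continuous_on UNIV f"
    unfolding continuous_on_iff
  proof (intro ballI allI impI)
    fix x and e :: real assume "0 < e"
    show "\<exists>d>0. \<forall>x'\<in>UNIV. dist x' x < d \<longrightarrow> dist (f x') (f x) < e"
    proof (intro exI[of _ "e / (C + 1)"] conjI ballI impI)
      show "0 < e / (C + 1)" using \<open>0 < e\<close> Cnn by simp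
      fix x' assume "dist x' x < e / (C + 1)"
      then have "(C+1) * dist x' x < e" using Cnn by (simp add: field_simps)
      moreover have "\<bar>f x' - f x\<bar> \<le> C * dist x' x" by (rule lip)
      moreover have "C * dist x' x \<le> (C+1) * dist x' x" by (simp add: distrib_right)
      ultimately show "dist (f x') (f x) < e" by (simp add: dist_real_def)
    qed
  qed
  have "compact (sphere (0::real^'n) 1)" by simp
  moreover have "sphere (0::real^'n) 1 \<noteq> {}"
    by (auto simp: sphere_def intro!: exI[of _ "axis undefined 1"])
  ultimately obtain x0 where x0: "x0 \<in> sphere 0 1" "\<And>y. y \<in> sphere 0 1 \<Longrightarrow> f x0 \<le> f y"
    using continuous_attains_inf[OF _ _ continuous_on_subset[OF cont]] by (metis subset_UNIV)
  have "x0 \<noteq> 0" using x0(1) by auto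
  then have c0: "0 < f x0" using vn_pos[OF assms, of x0] by auto
  have "f x0 * norm x \<le> f x" for x
  proof (cases "x = 0")
    case True then show ?thesis using vn_zero[OF assms] by simp
  next
    case False
    then have "(1/norm x) *\<^sub>R x \<in> sphere 0 1" by simp
    then have "f x0 \<le> f ((1/norm x) *\<^sub>R x)" by (rule x0(2))
    also have "\<dots> = f x / norm x" using vn_scale[OF assms] by simp
    finally show ?thesis using False by (simp add: field_simps)
  qed
  then show ?thesis using c0 by blast
qed

lemma vn_equiv: fixes f :: "real^'n \<Rightarrow> real"
  assumes "is_vnorm f" shows "\<exists>c C. 0 < c \<and> (\<forall>x. c * norm x \<le> f x \<and> f x \<le> C * norm x)"
  using vn_lower[OF assms] vn_upper[OF assms] by blast

lemma vn_equiv_fam: fixes M :: "'v \<Rightarrow> real^'n \<Rightarrow> real"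
  assumes "finite V" "\<forall>v\<in>V. is_vnorm (M v)"
  shows "\<exists>c C. 0 < c \<and> (\<forall>v\<in>V. \<forall>x. c * norm x \<le> M v x \<and> M v x \<le> C * norm x)"
  using assms
proof (induction V rule: finite_induct)
  case empty then show ?case by (intro exI[of _ 1]) auto
next
  case (insert a V)
  then obtain c C where cC: "0 < c" "\<forall>v\<in>V. \<forall>x. c * norm x \<le> M v x \<and> M v x \<le> C * norm x" by auto
  obtain c' C' where cC': "0 < c'" "\<forall>x. c' * norm x \<le> M a x \<and> M a x \<le> C' * norm x"
    using vn_equiv[of "M a"] insert.prems by auto
  have "\<forall>v\<in>insert a V. \<forall>x. min c c' * norm x \<le> M v x \<and> M v x \<le> max C C' * norm x"
  proof (intro ballI allI)
    fix v and x :: "real^'n" assume v: "v \<in> insert a V"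
    have "min c c' * norm x \<le> c * norm x" "min c c' * norm x \<le> c' * norm x"
      by (simp_all add: mult_right_mono)
    moreover have "C * norm x \<le> max C C' * norm x" "C' * norm x \<le> max C C' * norm x"
      by (simp_all add: mult_right_mono)
    ultimately show "min c c' * norm x \<le> M v x \<and> M v x \<le> max C C' * norm x"
      using v cC(2) cC'(2) by (metis insertE order_trans)
  qed
  then show ?case using cC(1) cC'(1) by (intro exI[of _ "min c c'"] exI[of _ "max C C'"]) simp
qed

lemma is_path_Cons: "is_path E (e # p) \<longleftrightarrow> e \<in> E \<and> (p = [] \<or> (fst (snd e) = fst (hd p) \<and> is_path E p))"
  by (cases p) auto

lemma is_path_subset: "is_path E p \<Longrightarrow> set p \<subseteq> E"
  by (induction E p rule: is_path.induct) auto

lemma is_path_append: "is_path E (p @ q) \<Longrightarrow> is_path E p \<and> is_path E q"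
proof (induction p)
  case Nil then show ?case by simp
next
  case (Cons e p)
  then show ?case by (cases p; cases q) (auto simp: is_path_Cons)
qed

lemma foldl_prod: fixes A :: "nat \<Rightarrow> real^'n^'n" and M0 :: "real^'n^'n"
  shows "foldl (\<lambda>M s. A s ** M) M0 \<sigma> = foldl (\<lambda>M s. A s ** M) (mat 1) \<sigma> ** M0"
proof (induction \<sigma> arbitrary: M0)
  case Nil then show ?case by simp
next
  case (Cons s \<sigma>)
  have 1: "foldl (\<lambda>M s. A s ** M) M0 (s # \<sigma>) = foldl (\<lambda>M s. A s ** M) (mat 1) \<sigma> ** (A s ** M0)"
    by (simp only: foldl_Cons Cons.IH[of "A s ** M0"])
  have 2: "foldl (\<lambda>M s. A s ** M) (mat 1) (s # \<sigma>) = foldl (\<lambda>M s. A s ** M) (mat 1) \<sigma> ** (A s ** mat 1)"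
    by (simp only: foldl_Cons Cons.IH[of "A s ** mat 1"])
  show ?case unfolding 1 2 by (simp add: matrix_mul_assoc)
qed

lemma seq_prod_append: "seq_prod A (\<sigma> @ \<tau>) = seq_prod A \<tau> ** seq_prod A \<sigma>"
  unfolding seq_prod_def foldl_append by (rule foldl_prod)

lemma seq_prod_Cons: "seq_prod A (s # \<sigma>) = seq_prod A \<sigma> ** A s"
  using seq_prod_append[of A "[s]" \<sigma>] by (simp add: seq_prod_def)

lemma path_prod_Cons: "path_prod A (e # p) = path_prod A p ** A (label e)"
  by (simp add: path_prod_def seq_prod_Cons)

lemma path_prod_Nil: "path_prod A [] = mat 1"
  by (simp add: path_prod_def seq_prod_def)

lemma out_edge:
  assumes "automaton V E N" "v \<in> V" shows "\<exists>w s. (v, w, s) \<in> E"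
proof -
  from assms(1) obtain e where e: "e \<in> E" unfolding automaton_def by blast
  obtain a b s where abs: "e = (a, b, s)" by (cases e) auto
  have aV: "a \<in> V" using e abs assms(1) unfolding automaton_def by auto
  have "(v, a) \<in> (edge_rel E)\<^sup>*" using assms aV unfolding automaton_def by blast
  then show ?thesis
  proof (cases rule: converse_rtranclE)
    case base then show ?thesis using e abs by blast
  next
    case (step c) then show ?thesis unfolding edge_rel_def by blast
  qed
qed

lemma paths_exist:
  assumes "automaton V E N" "v \<in> V"
  shows "\<exists>p. is_path E p \<and> length p = t \<and> (p = [] \<or> fst (hd p) = v)"
  using assms(2)
proof (induction t arbitrary: v)
  case 0 then show ?case by auto
next
  case (Suc t)
  obtain w s where e: "(v, w, s) \<in> E" using out_edge[OF assms(1) Suc.prems] by blast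
  then have "w \<in> V" using assms(1) unfolding automaton_def by auto
  then obtain p where p: "is_path E p" "length p = t" "p = [] \<or> fst (hd p) = w" using Suc.IH by blast
  then have "is_path E ((v, w, s) # p)" using e by (auto simp: is_path_Cons)
  then show ?case using p by (intro exI[of _ "(v, w, s) # p"]) auto
qed

lemma accepted_nonempty:
  assumes "automaton V E N" shows "\<exists>\<sigma>. accepted E \<sigma> \<and> length \<sigma> = t"
proof -
  obtain v where "v \<in> V" using assms unfolding automaton_def by blast
  then obtain p where "is_path E p" "length p = t" using paths_exist[OF assms] by blast
  then show ?thesis unfolding accepted_def by (intro exI[of _ "map label p"]) auto
qed

lemma accepted_finite:
  assumes "automaton V E N" shows "finite {\<sigma>. accepted E \<sigma> \<and> length \<sigma> = t}"
proof (rule finite_subset)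
  show "{\<sigma>. accepted E \<sigma> \<and> length \<sigma> = t} \<subseteq> {\<sigma>. set \<sigma> \<subseteq> {1..N} \<and> length \<sigma> = t}"
  proof safe
    fix \<sigma> x assume "accepted E \<sigma>" "x \<in> set \<sigma>"
    then obtain p where "is_path E p" "\<sigma> = map label p" unfolding accepted_def by blast
    then show "x \<in> {1..N}" using \<open>x \<in> set \<sigma>\<close> is_path_subset[of E p] assms
      unfolding automaton_def label_def by auto
  qed
  show "finite {\<sigma>. set \<sigma> \<subseteq> {1..N} \<and> length \<sigma> = t}"
    by (rule finite_lists_length_eq[OF finite_atLeastAtMost])
qed

lemma accepted_split:
  assumes "accepted E \<sigma>" "length \<sigma> = s + t"
  obtains \<sigma>1 \<sigma>2 where "\<sigma> = \<sigma>1 @ \<sigma>2" "accepted E \<sigma>1" "accepted E \<sigma>2" "length \<sigma>1 = s" "length \<sigma>2 = t"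
proof -
  obtain p where p: "is_path E p" "\<sigma> = map label p" using assms unfolding accepted_def by blast
  have "is_path E (take s p) \<and> is_path E (drop s p)" using is_path_append[of E "take s p" "drop s p"] p by simp
  then have "accepted E (map label (take s p))" "accepted E (map label (drop s p))"
    unfolding accepted_def by blast+
  moreover have "\<sigma> = map label (take s p) @ map label (drop s p)" using p(2)
    by (metis append_take_drop_id map_append)
  moreover have "length p = s + t" using p(2) assms(2) by simp
  ultimately show ?thesis by (intro that[of "map label (take s p)" "map label (drop s p)"]) simp_all
qed

lemma pow_powr_inv: assumes "0 \<le> (b::real)" "1 \<le> t" shows "(b ^ t) powr (1 / real t) = b"
proof (cases "b = 0")
  case True then show ?thesis using \<open>1 \<le> t\<close> by simp
next
  case False
  from assms have "b > 0" using False by simp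
  then have "(b ^ t) powr (1 / real t) = (b powr real t) powr (1 / real t)" by (simp add: powr_realpow)
  also have "\<dots> = b" using \<open>1 \<le> t\<close> \<open>b > 0\<close> by (simp add: powr_powr)
  finally show ?thesis .
qed

lemma root_const_lim: "0 < (D::real) \<Longrightarrow> (\<lambda>t. D powr (1 / real t)) \<longlonglongrightarrow> 1"
proof -
  assume D: "0 < D"
  have "\<forall>\<^sub>F t in sequentially. root t D = D powr (1 / real t)"
    using eventually_gt_at_top[of 0] by eventually_elim (use D in \<open>simp add: root_powr_inverse\<close>)
  then show ?thesis by (rule Lim_transform_eventually[OF LIMSEQ_root_const[OF D]])
qed

lemma fekete_core:
  fixes m :: "nat \<Rightarrow> real"
  assumes nn: "\<And>t. 0 \<le> m t" and sub: "\<And>s t. m (s + t) \<le> m s * m t"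
  shows "(\<lambda>t. m t powr (1 / real t)) \<longlonglongrightarrow> (INF t\<in>{1..}. m t powr (1 / real t))"
proof -
  define a where "a t = m t powr (1 / real t)" for t
  define L where "L = (INF t\<in>{1..}. a t)"
  have ann: "0 \<le> a t" for t by (simp add: a_def)
  have bdd: "bdd_below (a ` {1..})" by (intro bdd_belowI[of _ 0]) (auto simp: ann)
  have aL: "L \<le> a t" if "1 \<le> t" for t unfolding L_def using bdd that by (auto intro: cINF_lower)
  have L0: "0 \<le> L" unfolding L_def using ann by (auto intro: cINF_greatest)
  have "\<exists>no. \<forall>n\<ge>no. norm (a n - L) < r" if r: "0 < r" for r
  proof -
    define \<epsilon> where "\<epsilon> = r / 2"
    have \<epsilon>: "0 < \<epsilon>" using r by (simp add: \<epsilon>_def)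
    have "L < L + \<epsilon>" using \<epsilon> by simp
    then have "\<exists>k\<in>{1..}. a k < L + \<epsilon>"
      using bdd cINF_less_iff[of "{1..}" a "L + \<epsilon>"] unfolding L_def by blast
    then obtain k where k: "k \<in> {1..}" "a k < L + \<epsilon>" by blast
    define b where "b = L + \<epsilon>"
    have b: "0 < b" using L0 \<epsilon> by (simp add: b_def)
    have k1: "1 \<le> k" using k by simp
    have mk: "m k \<le> b ^ k"
    proof -
      have "m k = (a k) powr real k" using k1 nn[of k] by (simp add: a_def powr_powr)
      also have "\<dots> \<le> b powr real k" by (rule powr_mono2) (use ann k b_def in auto)
      also have "\<dots> = b ^ k" using b by (simp add: powr_realpow)
      finally show ?thesis .
    qed
    have mq: "m (q * k + r') \<le> m k ^ q * m r'" for q r'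
    proof (induction q)
      case 0 then show ?case by simp
    next
      case (Suc q)
      have "m (Suc q * k + r') = m (k + (q * k + r'))" by (simp add: algebra_simps)
      also have "\<dots> \<le> m k * m (q * k + r')" by (rule sub)
      also have "\<dots> \<le> m k * (m k ^ q * m r')" by (rule mult_left_mono[OF Suc nn])
      finally show ?case by (simp add: algebra_simps)
    qed
    define R where "R = Max (m ` {..<k})"
    define B where "B = Max ((\<lambda>r. 1 / b ^ r) ` {..<k})"
    have R: "m r' \<le> R" if "r' < k" for r' unfolding R_def using that by (auto intro: Max_ge)
    have B: "1 / b ^ r' \<le> B" if "r' < k" for r' unfolding B_def using that by (auto intro: Max_ge)
    have R0: "0 \<le> R" using R[of 0] nn[of 0] k1 by simp
    have B0: "0 \<le> B" using B[of 0] k1 by simp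
    define D where "D = R * B + 1"
    have D: "0 < D" using R0 B0 by (simp add: D_def add_nonneg_pos)
    have mt: "m t \<le> D * b ^ t" for t
    proof -
      define q where "q = t div k"
      define r' where "r' = t mod k"
      have t: "t = q * k + r'" by (simp add: q_def r'_def)
      have rk: "r' < k" using k1 by (simp add: r'_def)
      have "m t \<le> m k ^ q * m r'" using mq t by simp
      also have "\<dots> \<le> (b ^ k) ^ q * R"
        by (rule mult_mono) (use mk nn R rk b in \<open>auto intro: power_mono\<close>)
      also have "(b ^ k) ^ q = b ^ t * (1 / b ^ r')" using b t
        by (simp add: power_mult[symmetric] power_add mult.commute)
      also have "b ^ t * (1 / b ^ r') * R \<le> b ^ t * B * R"
        by (intro mult_right_mono mult_left_mono B rk) (use b R0 in auto)
      also have "\<dots> \<le> D * b ^ t" using b R0 B0 by (simp add: D_def algebra_simps)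
      finally show ?thesis .
    qed
    have at: "a t \<le> b * D powr (1 / real t)" if "1 \<le> t" for t
    proof -
      have "a t \<le> (D * b ^ t) powr (1 / real t)" unfolding a_def
        by (rule powr_mono2) (use mt nn in auto)
      also have "\<dots> = D powr (1 / real t) * b" using D b that by (simp add: powr_mult pow_powr_inv)
      finally show ?thesis by (simp add: mult.commute)
    qed
    have "\<forall>\<^sub>F t in sequentially. D powr (1 / real t) < 1 + \<epsilon> / b"
      using root_const_lim[OF D] b \<epsilon> by (intro order_tendstoD) auto
    then obtain N0 where N0: "\<And>t. t \<ge> N0 \<Longrightarrow> D powr (1 / real t) < 1 + \<epsilon> / b"
      by (auto simp: eventually_sequentially)
    show ?thesis
    proof (intro exI[of _ "max N0 1"] allI impI)
      fix t assume t: "max N0 1 \<le> t"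
      have "a t \<le> b * D powr (1 / real t)" using at t by simp
      also have "\<dots> < b * (1 + \<epsilon> / b)" using N0[of t] t b by simp
      also have "\<dots> = L + r" using b by (simp add: b_def \<epsilon>_def field_simps)
      finally have "a t < L + r" .
      moreover have "L \<le> a t" using aL t by simp
      ultimately show "norm (a t - L) < r" using r by simp
    qed
  qed
  then have "a \<longlonglongrightarrow> L" by (simp add: LIMSEQ_iff)
  then show ?thesis unfolding a_def[abs_def] L_def .
qed

lemma fekete:
  fixes m :: "nat \<Rightarrow> real"
  assumes nn: "\<And>t. 0 \<le> m t" and sub: "\<And>s t. m (s + t) \<le> D * m s * m t" and D: "0 < D"
  shows "convergent (\<lambda>t. m t powr (1 / real t))"
proof -
  define m' where "m' t = D * m t" for t
  have "m' (s + t) \<le> m' s * m' t" for s t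
  proof -
    have "m' (s + t) \<le> D * (D * m s * m t)" unfolding m'_def by (rule mult_left_mono[OF sub]) (use D in simp)
    then show ?thesis by (simp add: m'_def algebra_simps)
  qed
  moreover have "0 \<le> m' t" for t using nn D by (simp add: m'_def)
  ultimately have lim: "(\<lambda>t. m' t powr (1 / real t)) \<longlonglongrightarrow> (INF t\<in>{1..}. m' t powr (1 / real t))"
    using fekete_core by blast
  have eq: "m t powr (1 / real t) = m' t powr (1 / real t) / D powr (1 / real t)" for t
    using D by (simp add: m'_def powr_mult)
  have "(\<lambda>t. m' t powr (1 / real t) / D powr (1 / real t)) \<longlonglongrightarrow> (INF t\<in>{1..}. m' t powr (1 / real t)) / 1"
    by (rule tendsto_divide[OF lim root_const_lim[OF D]]) simp
  then show ?thesis unfolding eq convergent_def by blast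
qed

lemma mat_norm_le_entries: "norm (P :: real^'n^'m) \<le> (\<Sum>i\<in>UNIV. \<Sum>j\<in>UNIV. \<bar>P$i$j\<bar>)"
proof -
  have "norm P \<le> (\<Sum>i\<in>UNIV. norm (P$i))" unfolding norm_vec_def by (rule L2_set_le_sum) simp
  also have "\<dots> \<le> (\<Sum>i\<in>UNIV. \<Sum>j\<in>UNIV. \<bar>P$i$j\<bar>)" by (rule sum_mono) (rule norm_le_l1_cart)
  finally show ?thesis .
qed

lemma entry_le_norm: "\<bar>(P :: real^'n^'m)$i$j\<bar> \<le> norm P"
  using component_le_norm_cart[of "P$i" j] Finite_Cartesian_Product.norm_nth_le[of P i] by linarith

lemma mat_mult_norm: "norm ((X :: real^'n^'n) ** (Y :: real^'n^'n)) \<le> real (CARD('n))^3 * norm X * norm Y"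
proof -
  have e: "\<bar>(X ** Y)$i$j\<bar> \<le> real (CARD('n)) * (norm X * norm Y)" for i j
  proof -
    have "\<bar>(X ** Y)$i$j\<bar> = \<bar>\<Sum>k\<in>UNIV. X$i$k * Y$k$j\<bar>" by (simp add: matrix_matrix_mult_def)
    also have "\<dots> \<le> (\<Sum>k\<in>UNIV. \<bar>X$i$k\<bar> * \<bar>Y$k$j\<bar>)" by (rule order_trans[OF sum_abs]) (simp add: abs_mult)
    also have "\<dots> \<le> (\<Sum>k\<in>(UNIV::'n set). norm X * norm Y)"
      by (rule sum_mono, rule mult_mono) (auto simp: entry_le_norm)
    finally show ?thesis by simp
  qed
  have "norm (X ** Y) \<le> (\<Sum>i\<in>UNIV. \<Sum>j\<in>UNIV. \<bar>(X ** Y)$i$j\<bar>)" by (rule mat_norm_le_entries)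
  also have "\<dots> \<le> (\<Sum>i\<in>(UNIV::'n set). \<Sum>j\<in>(UNIV::'n set). real (CARD('n)) * (norm X * norm Y))"
    by (meson e sum_mono)
  also have "\<dots> = real (CARD('n))^3 * norm X * norm Y" by (simp add: power3_eq_cube)
  finally show ?thesis .
qed

lemma mat_norm_from_vec: assumes "\<And>x. norm ((P :: real^'n^'m) *v x) \<le> B * norm x"
  shows "norm P \<le> real (CARD('m)) * real (CARD('n)) * B"
proof -
  have "\<bar>P$i$j\<bar> \<le> B" for i j
  proof -
    have "P$i$j = (P *v axis j 1)$i" by (simp add: matrix_vector_mult_def axis_def if_distrib cong: if_cong)
    then have "\<bar>P$i$j\<bar> \<le> norm (P *v axis j 1)" using component_le_norm_cart by metis
    also have "\<dots> \<le> B" using assms[of "axis j 1"] by simp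
    finally show ?thesis .
  qed
  then have "norm P \<le> (\<Sum>i\<in>(UNIV::'m set). \<Sum>j\<in>(UNIV::'n set). B)"
    by (intro order_trans[OF mat_norm_le_entries] sum_mono)
  then show ?thesis by simp
qed

definition Gset :: "('v \<times> 'v \<times> nat) set \<Rightarrow> (nat \<Rightarrow> real^'n^'n) \<Rightarrow> ('v \<Rightarrow> real^'n \<Rightarrow> real) \<Rightarrow> real set" where
  "Gset E A M = {\<gamma>. \<forall>x. \<forall>(v, w, s)\<in>E. M w (A s *v x) \<le> \<gamma> * M v x}"

lemma gamma_star_Gset: "gamma_star E A M = Inf (Gset E A M)"
  unfolding gamma_star_def Gset_def ..

lemma G_mem: "\<gamma> \<in> Gset E A M \<Longrightarrow> (v, w, s) \<in> E \<Longrightarrow> M w (A s *v x) \<le> \<gamma> * M v x"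
  unfolding Gset_def by fast

lemma G_memI: "(\<And>v w s x. (v, w, s) \<in> E \<Longrightarrow> M w (A s *v x) \<le> \<gamma> * M v x) \<Longrightarrow> \<gamma> \<in> Gset E A M"
  unfolding Gset_def by fast

lemma aut_edge: "automaton V E N \<Longrightarrow> (v, w, s) \<in> E \<Longrightarrow> v \<in> V \<and> w \<in> V"
  unfolding automaton_def by auto

lemma axis_nz: "(axis i (1::real) :: real^'n) \<noteq> 0"
  by (metis norm_axis_1 norm_zero zero_neq_one)

lemma fam_bounds:
  assumes "automaton V E N" "multinorm V (M :: 'v \<Rightarrow> real^'n \<Rightarrow> real)"
  obtains c C where "0 < c" "0 < C" "\<And>v x. v \<in> V \<Longrightarrow> c * norm x \<le> M v x"
    "\<And>v x. v \<in> V \<Longrightarrow> M v x \<le> C * norm x"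
proof -
  obtain c C where cC: "0 < c" "\<forall>v\<in>V. \<forall>x. c * norm x \<le> M v x \<and> M v x \<le> C * norm x"
    using vn_equiv_fam[of V M] assms unfolding automaton_def multinorm_def by blast
  obtain v0 where "v0 \<in> V" using assms(1) unfolding automaton_def by blast
  then have "c * norm (axis undefined (1::real) :: real^'n) \<le> C * norm (axis undefined (1::real) :: real^'n)"
    using cC(2) by (meson order_trans)
  then have "0 < C" using cC(1) by simp
  then show ?thesis using that cC by blast
qed

lemma G_nonneg:
  assumes "automaton V E N" "multinorm V (M :: 'v \<Rightarrow> real^'n \<Rightarrow> real)" "\<gamma> \<in> Gset E A M"
  shows "0 \<le> \<gamma>"
proof -
  obtain e where e: "e \<in> E" using assms(1) unfolding automaton_def by blast
  obtain v w s where vws: "e = (v, w, s)" by (cases e) auto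
  have V: "v \<in> V" "w \<in> V" using aut_edge[OF assms(1)] e vws by auto
  let ?x = "axis undefined (1::real) :: real^'n"
  have "0 \<le> M w (A s *v ?x)" using V assms(2) vn_nonneg unfolding multinorm_def by blast
  also have "\<dots> \<le> \<gamma> * M v ?x" using G_mem[OF assms(3)] e vws by blast
  finally have "0 \<le> \<gamma> * M v ?x" .
  moreover have "0 < M v ?x" using V assms(2) vn_pos axis_nz unfolding multinorm_def by blast
  ultimately show ?thesis by (simp add: zero_le_mult_iff)
qed

lemma G_nonempty:
  assumes "automaton V E N" "multinorm V (M :: 'v \<Rightarrow> real^'n \<Rightarrow> real)"
  shows "Gset E A M \<noteq> {}"
proof -
  obtain c C where cC: "0 < c" "0 < C" "\<And>v x. v \<in> V \<Longrightarrow> c * norm x \<le> M v x"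
    "\<And>v x. v \<in> V \<Longrightarrow> M v x \<le> C * norm x" using fam_bounds[OF assms] by blast
  define S where "S = (\<Sum>e\<in>E. onorm ((*v) (A (snd (snd e)))))"
  have fE: "finite E" using assms(1) unfolding automaton_def by blast
  have "C / c * S \<in> Gset E A M"
  proof (rule G_memI)
    fix v w s x assume e: "(v, w, s) \<in> E"
    have V: "v \<in> V" "w \<in> V" using aut_edge[OF assms(1) e] by auto
    have on: "onorm ((*v) (A s)) \<le> S" unfolding S_def
      using member_le_sum[OF e, of "\<lambda>e. onorm ((*v) (A (snd (snd e))))"] fE
      by (simp add: onorm_pos_le)
    have "M w (A s *v x) \<le> C * norm (A s *v x)" using cC(4)[OF V(2)] .
    also have "\<dots> \<le> C * (onorm ((*v) (A s)) * norm x)"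
      using onorm[OF matrix_vector_mul_bounded_linear, of "A s" x] cC(2) by simp
    also have "\<dots> \<le> C * (S * norm x)" using on cC(2) by (simp add: mult_right_mono)
    also have "\<dots> \<le> C * (S * (M v x / c))"
    proof -
      have "norm x \<le> M v x / c" using cC(3)[OF V(1), of x] cC(1) by (simp add: field_simps)
      moreover have "0 \<le> S" unfolding S_def by (rule sum_nonneg) (simp add: onorm_pos_le)
      ultimately have "S * norm x \<le> S * (M v x / c)" by (rule mult_left_mono)
      have "C * (S * norm x) \<le> C * (S * (M v x / c))"
        by (rule mult_left_mono[OF \<open>S * norm x \<le> S * (M v x / c)\<close>]) (use cC(2) in simp)
      then show ?thesis by simp
    qed
    also have "\<dots> = C / c * S * M v x" by simp
    finally show "M w (A s *v x) \<le> C / c * S * M v x" .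
  qed
  then show ?thesis by blast
qed

lemma G_inf:
  assumes "automaton V E N" "multinorm V (M :: 'v \<Rightarrow> real^'n \<Rightarrow> real)"
  shows "gamma_star E A M \<in> Gset E A M" "\<And>\<gamma>. \<gamma> \<in> Gset E A M \<Longrightarrow> gamma_star E A M \<le> \<gamma>"
proof -
  have ne: "Gset E A M \<noteq> {}" by (rule G_nonempty[OF assms])
  have bdd: "bdd_below (Gset E A M)"
  proof (rule bdd_belowI[of _ 0])
    fix \<gamma> assume "\<gamma> \<in> Gset E A M" then show "0 \<le> \<gamma>" by (rule G_nonneg[OF assms])
  qed
  show "\<And>\<gamma>. \<gamma> \<in> Gset E A M \<Longrightarrow> gamma_star E A M \<le> \<gamma>"
    unfolding gamma_star_Gset by (rule cInf_lower[OF _ bdd])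
  show "gamma_star E A M \<in> Gset E A M"
  proof (rule G_memI)
    fix v w s x assume e: "(v, w, s) \<in> E"
    have V: "v \<in> V" "w \<in> V" using aut_edge[OF assms(1) e] by auto
    have nv: "is_vnorm (M v)" "is_vnorm (M w)" using V assms(2) unfolding multinorm_def by auto
    show "M w (A s *v x) \<le> gamma_star E A M * M v x"
    proof (cases "x = 0")
      case True then show ?thesis using vn_zero[OF nv(1)] vn_zero[OF nv(2)] by simp
    next
      case False
      then have pos: "0 < M v x" by (rule vn_pos[OF nv(1)])
      have "M w (A s *v x) / M v x \<le> Inf (Gset E A M)"
      proof (rule cInf_greatest[OF ne])
        fix \<gamma> assume "\<gamma> \<in> Gset E A M"
        then have "M w (A s *v x) \<le> \<gamma> * M v x" using e by (rule G_mem)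
        then show "M w (A s *v x) / M v x \<le> \<gamma>" using pos by (subst pos_divide_le_eq)
      qed
      then show ?thesis using pos unfolding gamma_star_Gset by (subst (asm) pos_divide_le_eq)
    qed
  qed
qed

lemma path_bound:
  assumes "\<gamma> \<in> Gset E A M" "0 \<le> \<gamma>"
  shows "is_path E p \<Longrightarrow> p \<noteq> [] \<Longrightarrow>
    \<forall>x. M (fst (snd (last p))) (path_prod A p *v x) \<le> \<gamma> ^ length p * M (fst (hd p)) x"
proof (induction p)
  case Nil then show ?case by simp
next
  case (Cons e1 p)
  obtain v w s where e1: "e1 = (v, w, s)" by (cases e1) auto
  have eE: "(v, w, s) \<in> E" using Cons.prems e1 by (simp add: is_path_Cons)
  show ?case
  proof (cases "p = []")
    case True
    then show ?thesis using e1 eE G_mem[OF assms(1)]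
      by (auto simp: path_prod_Cons path_prod_Nil label_def)
  next
    case False
    have pp: "is_path E p" "fst (hd p) = w" using Cons.prems e1 False by (auto simp: is_path_Cons)
    show ?thesis
    proof
      fix x
      have IH: "M (fst (snd (last p))) (path_prod A p *v (A s *v x))
          \<le> \<gamma> ^ length p * M (fst (hd p)) (A s *v x)"
        using Cons.IH pp False by blast
      have "M w (A s *v x) \<le> \<gamma> * M v x" using G_mem[OF assms(1) eE] .
      then have "\<gamma> ^ length p * M (fst (hd p)) (A s *v x) \<le> \<gamma> ^ length p * (\<gamma> * M v x)"
        using pp assms(2) by (simp add: mult_left_mono)
      have eq1: "path_prod A (e1 # p) *v x = path_prod A p *v (A s *v x)"
        by (simp add: path_prod_Cons label_def e1 matrix_vector_mul_assoc)
      have eq2: "last (e1 # p) = last p" "fst (hd (e1 # p)) = v" "length (e1 # p) = Suc (length p)"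
        using False e1 by auto
      have eq3: "\<gamma> ^ length p * (\<gamma> * M v x) = \<gamma> ^ Suc (length p) * M v x" by simp
      show "M (fst (snd (last (e1 # p)))) (path_prod A (e1 # p) *v x)
          \<le> \<gamma> ^ length (e1 # p) * M (fst (hd (e1 # p))) x"
        unfolding eq1 eq2 eq3[symmetric] using IH \<open>\<gamma> ^ length p * M (fst (hd p)) (A s *v x) \<le> _\<close>
        by (rule order_trans)
    qed
  qed
qed

definition mseq :: "('v \<times> 'v \<times> nat) set \<Rightarrow> (nat \<Rightarrow> real^'n^'n) \<Rightarrow> nat \<Rightarrow> real" where
  "mseq E A t = Max ((\<lambda>\<sigma>. norm (seq_prod A \<sigma>)) ` {\<sigma>. accepted E \<sigma> \<and> length \<sigma> = t})"

lemma mseq_ge: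
  assumes "automaton V E N" "accepted E \<sigma>" "length \<sigma> = t"
  shows "norm (seq_prod A \<sigma>) \<le> mseq E A t"
  unfolding mseq_def using assms(2,3) accepted_finite[OF assms(1), of t] by (intro Max_ge) auto

lemma mseq_nn:
  assumes "automaton V E N" shows "0 \<le> mseq E A t"
proof -
  obtain \<sigma> where "accepted E \<sigma>" "length \<sigma> = t" using accepted_nonempty[OF assms] by blast
  then have "norm (seq_prod A \<sigma>) \<le> mseq E A t" by (rule mseq_ge[OF assms])
  then show ?thesis using norm_ge_zero order_trans by blast
qed

lemma mseq_le:
  assumes "automaton V E N" "\<And>\<sigma>. accepted E \<sigma> \<Longrightarrow> length \<sigma> = t \<Longrightarrow> norm (seq_prod A \<sigma>) \<le> B"
  shows "mseq E A t \<le> B"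
  unfolding mseq_def
proof (rule Max.boundedI)
  show "finite ((\<lambda>\<sigma>. norm (seq_prod A \<sigma>)) ` {\<sigma>. accepted E \<sigma> \<and> length \<sigma> = t})"
    using accepted_finite[OF assms(1)] by simp
  show "(\<lambda>\<sigma>. norm (seq_prod A \<sigma>)) ` {\<sigma>. accepted E \<sigma> \<and> length \<sigma> = t} \<noteq> {}"
    using accepted_nonempty[OF assms(1)] by auto
  show "\<And>a. a \<in> (\<lambda>\<sigma>. norm (seq_prod A \<sigma>)) ` {\<sigma>. accepted E \<sigma> \<and> length \<sigma> = t} \<Longrightarrow> a \<le> B"
    using assms(2) by auto
qed

lemma mseq_in:
  assumes "automaton V E N"
  shows "\<exists>\<sigma>. accepted E \<sigma> \<and> length \<sigma> = t \<and> mseq E A t = norm (seq_prod A \<sigma>)"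
proof -
  have "mseq E A t \<in> (\<lambda>\<sigma>. norm (seq_prod A \<sigma>)) ` {\<sigma>. accepted E \<sigma> \<and> length \<sigma> = t}"
    unfolding mseq_def using accepted_finite[OF assms] accepted_nonempty[OF assms]
    by (intro Max_in) auto
  then show ?thesis by auto
qed

lemma mseq_sub:
  fixes A :: "nat \<Rightarrow> real^'n^'n"
  assumes "automaton V E N"
  shows "mseq E A (s + t) \<le> real CARD('n)^3 * mseq E A s * mseq E A t"
proof (rule mseq_le[OF assms])
  fix \<sigma> assume \<sigma>: "accepted E \<sigma>" "length \<sigma> = s + t"
  obtain \<sigma>1 \<sigma>2 where sp: "\<sigma> = \<sigma>1 @ \<sigma>2" "accepted E \<sigma>1" "accepted E \<sigma>2" "length \<sigma>1 = s" "length \<sigma>2 = t"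
    using accepted_split[OF \<sigma>] by blast
  have "norm (seq_prod A \<sigma>) = norm (seq_prod A \<sigma>2 ** seq_prod A \<sigma>1)" by (simp add: sp(1) seq_prod_append)
  also have "\<dots> \<le> real CARD('n)^3 * norm (seq_prod A \<sigma>2) * norm (seq_prod A \<sigma>1)" by (rule mat_mult_norm)
  also have "\<dots> \<le> real CARD('n)^3 * mseq E A t * mseq E A s"
  proof -
    have "norm (seq_prod A \<sigma>2) \<le> mseq E A t" by (rule mseq_ge[OF assms sp(3,5)])
    moreover have "norm (seq_prod A \<sigma>1) \<le> mseq E A s" by (rule mseq_ge[OF assms sp(2,4)])
    moreover have "0 \<le> mseq E A t" "0 \<le> mseq E A s" by (rule mseq_nn[OF assms])+
    ultimately show ?thesis by (intro mult_mono mult_left_mono) auto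
  qed
  finally show "norm (seq_prod A \<sigma>) \<le> real CARD('n)^3 * mseq E A s * mseq E A t" by (simp add: ac_simps)
qed

lemma cjsr_lim:
  fixes A :: "nat \<Rightarrow> real^'n^'n"
  assumes "automaton V E N"
  shows "(\<lambda>t. mseq E A t powr (1 / real t)) \<longlonglongrightarrow> cjsr E A"
proof -
  have eq: "Max {norm (seq_prod A \<sigma>) powr (1 / real t) | \<sigma>. accepted E \<sigma> \<and> length \<sigma> = t}
            = mseq E A t powr (1 / real t)" for t
  proof (rule Max_eqI)
    show "finite {norm (seq_prod A \<sigma>) powr (1 / real t) | \<sigma>. accepted E \<sigma> \<and> length \<sigma> = t}"
      using accepted_finite[OF assms, of t] by (rule finite_image_set)
    fix y assume "y \<in> {norm (seq_prod A \<sigma>) powr (1 / real t) | \<sigma>. accepted E \<sigma> \<and> length \<sigma> = t}"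
    then obtain \<sigma> where s: "accepted E \<sigma>" "length \<sigma> = t" "y = norm (seq_prod A \<sigma>) powr (1 / real t)" by blast
    have "norm (seq_prod A \<sigma>) \<le> mseq E A t" by (rule mseq_ge[OF assms s(1,2)])
    then show "y \<le> mseq E A t powr (1 / real t)" unfolding s(3) by (intro powr_mono2) auto
  next
    obtain \<sigma> where "accepted E \<sigma> \<and> length \<sigma> = t \<and> mseq E A t = norm (seq_prod A \<sigma>)"
      using mseq_in[OF assms] by blast
    then show "mseq E A t powr (1 / real t) \<in> {norm (seq_prod A \<sigma>) powr (1 / real t) | \<sigma>. accepted E \<sigma> \<and> length \<sigma> = t}"
      by auto
  qed
  have "convergent (\<lambda>t. mseq E A t powr (1 / real t))"
    by (rule fekete[of _ "real CARD('n)^3"]) (use mseq_nn[OF assms] mseq_sub[OF assms] in auto)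
  then have "(\<lambda>t. mseq E A t powr (1 / real t)) \<longlonglongrightarrow> lim (\<lambda>t. mseq E A t powr (1 / real t))"
    by (simp add: convergent_LIMSEQ_iff)
  moreover have "cjsr E A = lim (\<lambda>t. mseq E A t powr (1 / real t))"
    unfolding cjsr_def eq ..
  ultimately show ?thesis by simp
qed

lemma cjsr_nn:
  fixes A :: "nat \<Rightarrow> real^'n^'n"
  assumes "automaton V E N" shows "0 \<le> cjsr E A"
  by (rule LIMSEQ_le_const[OF cjsr_lim[OF assms]]) simp

lemma path_ends:
  assumes "automaton V E N" "is_path E p" "p \<noteq> []"
  shows "fst (hd p) \<in> V" "fst (snd (last p)) \<in> V"
proof -
  have sub: "E \<subseteq> V \<times> V \<times> {1..N}" using assms(1) unfolding automaton_def by blast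
  have "hd p \<in> E" "last p \<in> E" using is_path_subset[OF assms(2)] assms(3) by auto
  then show "fst (hd p) \<in> V" "fst (snd (last p)) \<in> V" using sub by auto
qed

lemma cjsr_le:
  fixes A :: "nat \<Rightarrow> real^'n^'n" and M :: "'v \<Rightarrow> real^'n \<Rightarrow> real"
  assumes aut: "automaton V E N" and mn: "multinorm V M" and G: "\<gamma> \<in> Gset E A M" and g0: "0 \<le> \<gamma>"
  shows "cjsr E A \<le> \<gamma>"
proof -
  obtain c C where cC: "0 < c" "0 < C" "\<And>v x. v \<in> V \<Longrightarrow> c * norm x \<le> M v x"
    "\<And>v x. v \<in> V \<Longrightarrow> M v x \<le> C * norm x" using fam_bounds[OF aut mn] by blast
  define D where "D = real CARD('n) * real CARD('n) * (C / c)"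
  have D: "0 < D" using cC by (simp add: D_def)
  have mb: "mseq E A t \<le> D * \<gamma> ^ t" if t: "1 \<le> t" for t
  proof (rule mseq_le[OF aut])
    fix \<sigma> assume \<sigma>: "accepted E \<sigma>" "length \<sigma> = t"
    then obtain p where p: "is_path E p" "\<sigma> = map label p" unfolding accepted_def by blast
    have pne: "p \<noteq> []" using p \<sigma> t by auto
    define v where "v = fst (hd p)"
    define w where "w = fst (snd (last p))"
    have V: "v \<in> V" "w \<in> V" using path_ends[OF aut p(1) pne] by (simp_all add: v_def w_def)
    have P: "seq_prod A \<sigma> = path_prod A p" by (simp add: p(2) path_prod_def)
    have lp: "length p = t" using p \<sigma> by simp
    have "norm (seq_prod A \<sigma> *v x) \<le> (C / c * \<gamma> ^ t) * norm x" for x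
    proof -
      have "c * norm (path_prod A p *v x) \<le> M w (path_prod A p *v x)" by (rule cC(3)[OF V(2)])
      also have "\<dots> \<le> \<gamma> ^ t * M v x"
        using path_bound[OF G g0 p(1) pne] lp by (simp add: v_def w_def)
      also have "\<dots> \<le> \<gamma> ^ t * (C * norm x)" by (rule mult_left_mono[OF cC(4)[OF V(1)]]) (use g0 in simp)
      finally have "c * norm (path_prod A p *v x) \<le> \<gamma> ^ t * (C * norm x)" .
      then have "norm (path_prod A p *v x) \<le> \<gamma> ^ t * (C * norm x) / c" using cC(1)
        by (simp add: pos_le_divide_eq mult.commute)
      then show ?thesis by (simp add: P field_simps)
    qed
    then have "norm (seq_prod A \<sigma>) \<le> real CARD('n) * real CARD('n) * (C / c * \<gamma> ^ t)"
      by (rule mat_norm_from_vec)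
    then show "norm (seq_prod A \<sigma>) \<le> D * \<gamma> ^ t" by (simp add: D_def ac_simps)
  qed
  have lim2: "(\<lambda>t. D powr (1 / real t) * \<gamma>) \<longlonglongrightarrow> 1 * \<gamma>"
    by (intro tendsto_mult root_const_lim[OF D] tendsto_const)
  show ?thesis
  proof (rule LIMSEQ_le[OF cjsr_lim[OF aut] lim2[simplified]])
    show "\<exists>N. \<forall>t\<ge>N. mseq E A t powr (1 / real t) \<le> D powr (1 / real t) * \<gamma>"
    proof (intro exI[of _ 1] allI impI)
      fix t :: nat assume t: "1 \<le> t"
      have "mseq E A t powr (1 / real t) \<le> (D * \<gamma> ^ t) powr (1 / real t)"
        by (rule powr_mono2) (use mb[OF t] mseq_nn[OF aut] in auto)
      also have "\<dots> = D powr (1 / real t) * \<gamma>" by (simp add: powr_mult pow_powr_inv[OF g0 t])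
      finally show "mseq E A t powr (1 / real t) \<le> D powr (1 / real t) * \<gamma>" .
    qed
  qed
qed

theorem theorem2p7:
  fixes V :: "'v set" and E :: "('v \<times> 'v \<times> nat) set" and N :: nat
    and A :: "nat \<Rightarrow> real^'n^'n" and nrm :: "real^'n \<Rightarrow> real"
  assumes "automaton V E N"
    and "is_vnorm nrm"
  shows "(\<exists>M. multinorm V M \<and> gamma_star E A M = cjsr E A) \<longleftrightarrow>
         (\<exists>K\<ge>1. \<forall>p x. is_path E p \<longrightarrow>
             nrm (path_prod A p *v x) \<le> K * cjsr E A ^ length p * nrm x)"
proof
  assume "\<exists>M. multinorm V M \<and> gamma_star E A M = cjsr E A"
  then obtain M :: "'v \<Rightarrow> real^'n \<Rightarrow> real" where mn: "multinorm V M" and eqL: "gamma_star E A M = cjsr E A"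
    by blast
  define L where "L = cjsr E A"
  have G: "L \<in> Gset E A M" unfolding L_def eqL[symmetric] by (rule G_inf(1)[OF assms(1) mn])
  have L0: "0 \<le> L" using cjsr_nn[OF assms(1)] by (simp add: L_def)
  obtain c C where cC: "0 < c" "0 < C" "\<And>v x. v \<in> V \<Longrightarrow> c * norm x \<le> M v x"
    "\<And>v x. v \<in> V \<Longrightarrow> M v x \<le> C * norm x" using fam_bounds[OF assms(1) mn] by blast
  obtain cn Cn where cn: "0 < cn" "\<And>x. cn * norm x \<le> nrm x" "\<And>x. nrm x \<le> Cn * norm x"
    using vn_equiv[OF assms(2)] by blast
  have Cn0: "0 \<le> Cn"
  proof -
    have "cn * norm (axis undefined (1::real) :: real^'n) \<le> Cn * norm (axis undefined (1::real) :: real^'n)"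
      using cn(2,3) order_trans by blast
    then show ?thesis using cn(1) by simp
  qed
  define K where "K = max 1 (Cn * C / (c * cn))"
  show "\<exists>K\<ge>1. \<forall>p x. is_path E p \<longrightarrow> nrm (path_prod A p *v x) \<le> K * cjsr E A ^ length p * nrm x"
  proof (intro exI[of _ K] conjI allI impI)
    show "1 \<le> K" by (simp add: K_def)
    fix p and x :: "real^'n" assume p: "is_path E p"
    have nx: "0 \<le> nrm x" by (rule vn_nonneg[OF assms(2)])
    show "nrm (path_prod A p *v x) \<le> K * cjsr E A ^ length p * nrm x"
    proof (cases "p = []")
      case True
      have "1 * nrm x \<le> K * nrm x" by (rule mult_right_mono) (simp_all add: K_def nx)
      then show ?thesis using True by (simp add: path_prod_Nil)
    next
      case False
      define v where "v = fst (hd p)"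
      define w where "w = fst (snd (last p))"
      define T where "T = length p"
      define y where "y = path_prod A p *v x"
      have V: "v \<in> V" "w \<in> V" using path_ends[OF assms(1) p False] by (simp_all add: v_def w_def)
      have LT: "0 \<le> L ^ T" using L0 by simp
      have "c * norm y \<le> M w y" by (rule cC(3)[OF V(2)])
      also have "\<dots> \<le> L ^ T * M v x"
        using path_bound[OF G L0 p False] by (simp add: v_def w_def T_def y_def)
      also have "\<dots> \<le> L ^ T * (C * norm x)" by (rule mult_left_mono[OF cC(4)[OF V(1)] LT])
      finally have n1: "norm y \<le> L ^ T * (C * norm x) / c" using cC(1) by (simp add: pos_le_divide_eq mult.commute)
      have n2: "norm x \<le> nrm x / cn" using cn(1) cn(2)[of x] by (simp add: pos_le_divide_eq mult.commute)
      have LTC: "0 \<le> L ^ T * C" using LT cC(2) by simp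
      have "nrm y \<le> Cn * norm y" by (rule cn(3))
      also have "\<dots> \<le> Cn * (L ^ T * (C * norm x) / c)" by (rule mult_left_mono[OF n1 Cn0])
      also have "\<dots> \<le> Cn * (L ^ T * (C * (nrm x / cn)) / c)"
      proof -
        have "L ^ T * C * norm x \<le> L ^ T * C * (nrm x / cn)" by (rule mult_left_mono[OF n2 LTC])
        then have "L ^ T * (C * norm x) \<le> L ^ T * (C * (nrm x / cn))" by (simp only: mult.assoc)
        then have "L ^ T * (C * norm x) / c \<le> L ^ T * (C * (nrm x / cn)) / c"
          using cC(1) by (rule divide_right_mono[OF _ less_imp_le])
        then show ?thesis by (rule mult_left_mono[OF _ Cn0])
      qed
      also have "\<dots> = (Cn * C / (c * cn)) * (L ^ T * nrm x)" using cC(1) cn(1) by (simp add: field_simps)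
      also have "\<dots> \<le> K * (L ^ T * nrm x)" by (rule mult_right_mono) (simp_all add: K_def LT nx)
      finally show ?thesis by (simp add: y_def T_def L_def mult.assoc)
    qed
  qed
next
  assume "\<exists>K\<ge>1. \<forall>p x. is_path E p \<longrightarrow> nrm (path_prod A p *v x) \<le> K * cjsr E A ^ length p * nrm x"
  then obtain K where K1: "1 \<le> K"
    and Kb: "\<And>p x. is_path E p \<Longrightarrow> nrm (path_prod A p *v x) \<le> K * cjsr E A ^ length p * nrm x" by blast
  define L where "L = cjsr E A"
  have L0: "0 \<le> L" using cjsr_nn[OF assms(1)] by (simp add: L_def)
  have Kb': "\<And>p x. is_path E p \<Longrightarrow> nrm (path_prod A p *v x) \<le> K * L ^ length p * nrm x"
    using Kb by (simp add: L_def)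
  define tm where "tm p x = nrm (path_prod A p *v x) / L ^ length p" for p :: "('v \<times> 'v \<times> nat) list" and x :: "real^'n"
  define Pv where "Pv v = {p. is_path E p \<and> (p = [] \<or> fst (hd p) = v)}" for v :: 'v
  define M where "M v x = (SUP p\<in>Pv v. tm p x)" for v and x :: "real^'n"
  have nilP: "[] \<in> Pv v" for v by (simp add: Pv_def)
  have Pne: "Pv v \<noteq> {}" for v using nilP by blast
  have nn: "0 \<le> nrm x" for x by (rule vn_nonneg[OF assms(2)])
  have tm_nn: "0 \<le> tm p x" for p x using nn L0 by (simp add: tm_def)
  have tm_nil: "tm [] x = nrm x" for x by (simp add: tm_def path_prod_Nil)
  have tm_bd: "tm p x \<le> K * nrm x" if p: "is_path E p" for p x
  proof (cases "L = 0")
    case True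
    show ?thesis
    proof (cases "p = []")
      case True
      have "1 * nrm x \<le> K * nrm x" by (rule mult_right_mono[OF K1 nn])
      then show ?thesis using True by (simp add: tm_nil)
    next
      case False
      then have "tm p x = 0" using \<open>L = 0\<close> by (simp add: tm_def power_0_left)
      then show ?thesis using K1 nn by simp
    qed
  next
    case False
    then have Lp: "0 < L ^ length p" using L0 by simp
    have "nrm (path_prod A p *v x) \<le> K * nrm x * L ^ length p" using Kb'[OF p, of x] by (simp add: ac_simps)
    then show ?thesis unfolding tm_def using Lp by (simp add: pos_divide_le_eq)
  qed
  have bdd: "bdd_above ((\<lambda>p. tm p x) ` Pv v)" for v x
    by (rule bdd_aboveI[of _ "K * nrm x"]) (auto simp: Pv_def intro: tm_bd)
  have M_ge: "tm p x \<le> M v x" if "p \<in> Pv v" for p v x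
    unfolding M_def by (rule cSUP_upper[OF that bdd])
  have M_le: "M v x \<le> B" if "\<And>p. p \<in> Pv v \<Longrightarrow> tm p x \<le> B" for v x B
    unfolding M_def by (rule cSUP_least[OF Pne that])
  have M_nrm: "nrm x \<le> M v x" for v x using M_ge[OF nilP, of x v] by (simp add: tm_nil)
  have M_K: "M v x \<le> K * nrm x" for v x by (rule M_le) (auto simp: Pv_def intro: tm_bd)
  have tm_scale: "tm p (a *\<^sub>R x) = \<bar>a\<bar> * tm p x" for p a x
    by (simp add: tm_def matrix_vector_mult_scaleR vn_scale[OF assms(2)])
  have tm_add: "tm p (x + y) \<le> tm p x + tm p y" for p x y
  proof -
    have "nrm (path_prod A p *v (x + y)) \<le> nrm (path_prod A p *v x) + nrm (path_prod A p *v y)"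
      by (simp add: matrix_vector_right_distrib vn_tri[OF assms(2)])
    then show ?thesis unfolding tm_def using L0
      by (simp add: add_divide_distrib[symmetric] divide_right_mono)
  qed
  have vnM: "is_vnorm (M v)" for v
    unfolding is_vnorm_def
  proof (intro conjI allI)
    fix x show "0 \<le> M v x" using nn[of x] M_nrm[of x v] by linarith
  next
    fix x show "M v x = 0 \<longleftrightarrow> x = 0"
    proof
      assume "M v x = 0"
      then have "nrm x \<le> 0" using M_nrm[of x v] by simp
      then have "nrm x = 0" using nn[of x] by linarith
      then show "x = 0" using assms(2) unfolding is_vnorm_def by blast
    next
      assume "x = 0"
      then have "M v x \<le> 0" using M_K[of v x] vn_zero[OF assms(2)] by simp
      then show "M v x = 0" using nn[of x] M_nrm[of x v] by linarith
    qed
  next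
    fix a x
    show "M v (a *\<^sub>R x) = \<bar>a\<bar> * M v x"
    proof (rule antisym)
      show "M v (a *\<^sub>R x) \<le> \<bar>a\<bar> * M v x"
      proof (rule M_le)
        fix p assume "p \<in> Pv v"
        then have "tm p x \<le> M v x" by (rule M_ge)
        then show "tm p (a *\<^sub>R x) \<le> \<bar>a\<bar> * M v x" unfolding tm_scale by (rule mult_left_mono) simp
      qed
      show "\<bar>a\<bar> * M v x \<le> M v (a *\<^sub>R x)"
      proof (cases "a = 0")
        case True
        then show ?thesis using nn[of "a *\<^sub>R x"] M_nrm[of "a *\<^sub>R x" v] by simp
      next
        case False
        then have ap: "0 < \<bar>a\<bar>" by simp
        have "M v x \<le> M v (a *\<^sub>R x) / \<bar>a\<bar>"
        proof (rule M_le)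
          fix p assume "p \<in> Pv v"
          then have "tm p (a *\<^sub>R x) \<le> M v (a *\<^sub>R x)" by (rule M_ge)
          then show "tm p x \<le> M v (a *\<^sub>R x) / \<bar>a\<bar>" using ap unfolding tm_scale
            by (simp add: pos_le_divide_eq mult.commute)
        qed
        then show ?thesis using ap by (simp add: pos_le_divide_eq mult.commute)
      qed
    qed
  next
    fix x y
    show "M v (x + y) \<le> M v x + M v y"
    proof (rule M_le)
      fix p assume p: "p \<in> Pv v"
      have "tm p (x + y) \<le> tm p x + tm p y" by (rule tm_add)
      also have "\<dots> \<le> M v x + M v y" using M_ge[OF p, of x] M_ge[OF p, of y] by linarith
      finally show "tm p (x + y) \<le> M v x + M v y" .
    qed
  qed
  have mn: "multinorm V M" unfolding multinorm_def using vnM by blast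
  have G: "L \<in> Gset E A M"
  proof (rule G_memI)
    fix v w s and x :: "real^'n" assume e: "(v, w, s) \<in> E"
    show "M w (A s *v x) \<le> L * M v x"
    proof (rule M_le)
      fix p assume p: "p \<in> Pv w"
      define q where "q = (v, w, s) # p"
      have pp: "is_path E p" "p = [] \<or> fst (hd p) = w" using p by (auto simp: Pv_def)
      have qP: "q \<in> Pv v" using e pp by (auto simp: Pv_def q_def is_path_Cons)
      have pq: "path_prod A q *v x = path_prod A p *v (A s *v x)"
        by (simp add: q_def path_prod_Cons label_def matrix_vector_mul_assoc)
      show "tm p (A s *v x) \<le> L * M v x"
      proof (cases "L = 0")
        case False
        then have Lp: "0 < L" using L0 by simp
        have "tm q x = nrm (path_prod A p *v (A s *v x)) / L ^ Suc (length p)"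
          unfolding tm_def pq by (simp add: q_def)
        then have "tm p (A s *v x) = L * tm q x" using Lp
          by (simp add: tm_def field_simps)
        also have "\<dots> \<le> L * M v x" by (rule mult_left_mono[OF M_ge[OF qP] L0])
        finally show ?thesis .
      next
        case True
        show ?thesis
        proof (cases "p = []")
          case True
          have "nrm (path_prod A [(v, w, s)] *v x) \<le> K * L ^ 1 * nrm x"
            using Kb'[of "[(v, w, s)]" x] e by simp
          then have "nrm (A s *v x) \<le> 0" using \<open>L = 0\<close> by (simp add: path_prod_Cons path_prod_Nil label_def)
          then show ?thesis using True \<open>L = 0\<close> by (simp add: tm_def path_prod_Nil)
        next
          case False
          then show ?thesis using \<open>L = 0\<close> by (simp add: tm_def power_0_left)
        qed
      qed
    qed
  qed
  have g1: "gamma_star E A M \<in> Gset E A M" by (rule G_inf(1)[OF assms(1) mn])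
  have g2: "gamma_star E A M \<le> L" by (rule G_inf(2)[OF assms(1) mn G])
  have g3: "L \<le> gamma_star E A M"
    unfolding L_def by (rule cjsr_le[OF assms(1) mn g1 G_nonneg[OF assms(1) mn g1]])
  show "\<exists>M. multinorm V M \<and> gamma_star E A M = cjsr E A"
    using mn g2 g3 by (intro exI[of _ M]) (simp add: L_def)
qed

end
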